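(* Every classical knot $K$ can be represented on a virtual row mosaic (a $1\times n$ virtual rectangular mosaic for some $n$) whose closure surface has genus zero.
   Context: Mosaic tiles are the eleven standard unit-square tiles $T_0,\dots,T_{10}$ ($T_0$ blank; $T_1,\dots,T_8$ non-crossing tiles with one or two arcs; $T_9,T_{10}$ the two crossing tiles, each containing a horizontal and a vertical strand crossing at the center). A virtual rectangular mosaic is an $m\times n$ array of tiles together with a pairing (with orientation) of the $2(m+n)$ boundary unit edges such that the quotient is a closed orientable surface $\Sigma_D$ carrying a knot diagram $D$; its genus is the genus of $\Sigma_D$ (for $m\times n$ with $v_D$ vertex classes after identification, $g(D)=(1-v_D+m+n)/2$). A genus zero mosaic thus gives a diagram on the sphere, i.e. a classical knot diagram. A row mosaic is a $1\times n$ virtual rectangular mosaic. *)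

theory Defs
  imports Main
begin

datatype side = N | E | S | W

text \<open>T0 blank; T1..T4 single corner arcs;
  T5 horizontal, T6 vertical straight strand; T7, T8 double-arc tiles;
  T9, T10 crossing tiles (T9: horizontal strand over, T10: vertical strand over).\<close>
datatype tile = T0 | T1 | T2 | T3 | T4 | T5 | T6 | T7 | T8 | T9 | T10

text \<open>conn t s: the other endpoint (side) of the strand of tile t that ends at the
  midpoint of side s, if any.\<close>
fun conn :: "tile \<Rightarrow> side \<Rightarrow> side option" where
  "conn T1 N = Some W" | "conn T1 W = Some N"
| "conn T2 N = Some E" | "conn T2 E = Some N"
| "conn T3 E = Some S" | "conn T3 S = Some E"
| "conn T4 S = Some W" | "conn T4 W = Some S"
| "conn T5 W = Some E" | "conn T5 E = Some W"
| "conn T6 N = Some S" | "conn T6 S = Some N"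
| "conn T7 N = Some W" | "conn T7 W = Some N" | "conn T7 E = Some S" | "conn T7 S = Some E"
| "conn T8 N = Some E" | "conn T8 E = Some N" | "conn T8 S = Some W" | "conn T8 W = Some S"
| "conn T9 W = Some E" | "conn T9 E = Some W" | "conn T9 N = Some S" | "conn T9 S = Some N"
| "conn T10 W = Some E" | "conn T10 E = Some W" | "conn T10 N = Some S" | "conn T10 S = Some N"
| "conn _ _ = None"

definition crossing_tile :: "tile \<Rightarrow> bool" where
  "crossing_tile t \<longleftrightarrow> t = T9 \<or> t = T10"

definition over_at :: "tile \<Rightarrow> side \<Rightarrow> bool" where
  "over_at t s \<longleftrightarrow> (t = T9 \<and> (s = W \<or> s = E)) \<or> (t = T10 \<and> (s = N \<or> s = S))"

text \<open>An m x n mosaic: cell (i,j), row i (counted from the bottom, i < m),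
  column j (j < n), occupying [j,j+1] x [i,i+1]. A port is a cell together with a side.\<close>
type_synonym port = "nat \<times> nat \<times> side"
type_synonym mtiles = "nat \<Rightarrow> nat \<Rightarrow> tile"

definition valid_port :: "nat \<Rightarrow> nat \<Rightarrow> port \<Rightarrow> bool" where
  "valid_port m n q = (case q of (i,j,s) \<Rightarrow> i < m \<and> j < n)"

definition is_boundary :: "nat \<Rightarrow> nat \<Rightarrow> port \<Rightarrow> bool" where
  "is_boundary m n q = (case q of (i,j,s) \<Rightarrow>
     (s = S \<and> i = 0) \<or> (s = N \<and> i = m - 1) \<or> (s = W \<and> j = 0) \<or> (s = E \<and> j = n - 1))"

text \<open>The 2(m+n) boundary unit edges are numbered 0..2(m+n)-1 counterclockwise starting
  at the lower left corner; edge k runs from boundary vertex k to boundary vertex k+1 (mod 2(m+n)).\<close>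
definition bport :: "nat \<Rightarrow> nat \<Rightarrow> nat \<Rightarrow> port" where
  "bport m n k =
     (if k < n then (0, k, S)
      else if k < n + m then (k - n, n - 1, E)
      else if k < 2*n + m then (m - 1, n - 1 - (k - n - m), N)
      else (m - 1 - (k - 2*n - m), 0, W))"

definition bidx :: "nat \<Rightarrow> nat \<Rightarrow> port \<Rightarrow> nat" where
  "bidx m n q = (case q of
       (i,j,S) \<Rightarrow> j
     | (i,j,E) \<Rightarrow> n + i
     | (i,j,N) \<Rightarrow> n + m + (n - 1 - j)
     | (i,j,W) \<Rightarrow> 2*n + m + (m - 1 - i))"

definition nbr :: "nat \<Rightarrow> nat \<Rightarrow> (nat \<Rightarrow> nat) \<Rightarrow> port \<Rightarrow> port" where
  "nbr m n p q =
     (if is_boundary m n q then bport m n (p (bidx m n q))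
      else (case q of
         (i,j,N) \<Rightarrow> (i+1, j, S)
       | (i,j,S) \<Rightarrow> (i-1, j, N)
       | (i,j,E) \<Rightarrow> (i, j+1, W)
       | (i,j,W) \<Rightarrow> (i, j-1, E)))"

definition has_end :: "mtiles \<Rightarrow> port \<Rightarrow> bool" where
  "has_end T q = (case q of (i,j,s) \<Rightarrow> conn (T i j) s \<noteq> None)"

text \<open>Virtual rectangular mosaic: a fixed-point-free involutive pairing of the 2(m+n)
  boundary edges (each pair glued reversing the boundary orientation, which is exactly the
  condition for the quotient of the rectangle to be orientable), such that the tiles are
  suitably connected across interior edges and across glued boundary edges.\<close>
definition virtual_mosaic :: "nat \<Rightarrow> nat \<Rightarrow> mtiles \<Rightarrow> (nat \<Rightarrow> nat) \<Rightarrow> bool" where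
  "virtual_mosaic m n T p \<longleftrightarrow>
     0 < m \<and> 0 < n \<and>
     (\<forall>k < 2*(m+n). p k < 2*(m+n) \<and> p k \<noteq> k \<and> p (p k) = k) \<and>
     (\<forall>q. valid_port m n q \<longrightarrow> (has_end T q \<longleftrightarrow> has_end T (nbr m n p q)))"

definition classical_mosaic :: "nat \<Rightarrow> nat \<Rightarrow> mtiles \<Rightarrow> bool" where
  "classical_mosaic m n T \<longleftrightarrow>
     0 < m \<and> 0 < n \<and>
     (\<forall>q. valid_port m n q \<and> is_boundary m n q \<longrightarrow> \<not> has_end T q) \<and>
     (\<forall>q. valid_port m n q \<and> \<not> is_boundary m n q \<longrightarrow> (has_end T q \<longleftrightarrow> has_end T (nbr m n id q)))"

text \<open>Vertex classes of the quotient: boundary vertex k is identified with the end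
  vertex of the paired edge p k, i.e. with vertex (p k + 1) mod 2(m+n).\<close>
definition vert_rel :: "nat \<Rightarrow> nat \<Rightarrow> (nat \<Rightarrow> nat) \<Rightarrow> (nat \<times> nat) set" where
  "vert_rel m n p = (let R = {(k, Suc (p k) mod (2*(m+n))) | k. k < 2*(m+n)} in (R \<union> R\<inverse>)\<^sup>*)"

definition num_vertices :: "nat \<Rightarrow> nat \<Rightarrow> (nat \<Rightarrow> nat) \<Rightarrow> nat" where
  "num_vertices m n p = card ({0..<2*(m+n)} // vert_rel m n p)"

definition mosaic_genus :: "nat \<Rightarrow> nat \<Rightarrow> (nat \<Rightarrow> nat) \<Rightarrow> int" where
  "mosaic_genus m n p = (1 - int (num_vertices m n p) + int m + int n) div 2"

definition exitp :: "mtiles \<Rightarrow> port \<Rightarrow> port" where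
  "exitp T q = (case q of (i,j,s) \<Rightarrow> (i, j, the (conn (T i j) s)))"

definition step :: "nat \<Rightarrow> nat \<Rightarrow> mtiles \<Rightarrow> (nat \<Rightarrow> nat) \<Rightarrow> port \<Rightarrow> port" where
  "step m n T p q = nbr m n p (exitp T q)"

definition ends :: "nat \<Rightarrow> nat \<Rightarrow> mtiles \<Rightarrow> port set" where
  "ends m n T = {q. valid_port m n q \<and> has_end T q}"

text \<open>The diagram is a knot: nonempty and a single closed curve.\<close>
definition one_component :: "nat \<Rightarrow> nat \<Rightarrow> mtiles \<Rightarrow> (nat \<Rightarrow> nat) \<Rightarrow> bool" where
  "one_component m n T p \<longleftrightarrow> ends m n T \<noteq> {} \<and>
     (\<exists>q \<in> ends m n T. \<forall>x \<in> ends m n T. \<exists>k. (step m n T p ^^ k) q \<in> {x, exitp T x})"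

text \<open>A letter: (crossing label, passes over?, crossing sign positive?).\<close>
type_synonym letter = "nat \<times> bool \<times> bool"

definition orbit_of :: "nat \<Rightarrow> nat \<Rightarrow> mtiles \<Rightarrow> (nat \<Rightarrow> nat) \<Rightarrow> port \<Rightarrow> port set" where
  "orbit_of m n T p q = range (\<lambda>k. (step m n T p ^^ k) q)"

text \<open>Sign of crossing cell (i,j) for the orientation of the traversal with orbit Orb:
  horizontal strand runs in +x direction iff entered from W, vertical in +y iff entered from S;
  the crossing is positive iff cross(d_over, d_under) > 0.\<close>
definition cross_sign :: "mtiles \<Rightarrow> port set \<Rightarrow> nat \<Rightarrow> nat \<Rightarrow> bool" where
  "cross_sign T Orb i j =
     (let hd = ((i,j,W) \<in> Orb); vd = ((i,j,S) \<in> Orb) in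
      if T i j = T9 then hd = vd else hd \<noteq> vd)"

definition gauss_code :: "nat \<Rightarrow> nat \<Rightarrow> mtiles \<Rightarrow> (nat \<Rightarrow> nat) \<Rightarrow> port \<Rightarrow> letter list" where
  "gauss_code m n T p q =
     (let L = (LEAST k. 0 < k \<and> (step m n T p ^^ k) q = q);
          Orb = orbit_of m n T p q in
      concat (map (\<lambda>k. case (step m n T p ^^ k) q of (i,j,s) \<Rightarrow>
                 if crossing_tile (T i j) then [(i*n+j, over_at (T i j) s, cross_sign T Orb i j)] else [])
              [0..<L]))"

text \<open>All Gauss codes of the diagram (all starting points and both orientations).\<close>
definition gauss_codes :: "nat \<Rightarrow> nat \<Rightarrow> mtiles \<Rightarrow> (nat \<Rightarrow> nat) \<Rightarrow> letter list set" where
  "gauss_codes m n T p = gauss_code m n T p ` ends m n T"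

definition r3_triple :: "letter list \<Rightarrow> letter list \<Rightarrow> letter list \<Rightarrow> bool" where
  "r3_triple P1 P2 P3 \<longleftrightarrow> (\<exists>a b c sa sb sc t mm bt.
     distinct [a,b,c] \<and>
     {P1,P2,P3} =
       {(if t then [(a,True,sa),(b,True,sb)] else [(b,True,sb),(a,True,sa)]),
        (if mm then [(a,False,sa),(c,True,sc)] else [(c,True,sc),(a,False,sa)]),
        (if bt then [(b,False,sb),(c,False,sc)] else [(c,False,sc),(b,False,sb)])} \<and>
     (sa = (t = mm)) = (sb = (t = bt)) \<and> (sb = (t = bt)) = (sc = (mm = bt)))"

inductive gstep :: "letter list \<Rightarrow> letter list \<Rightarrow> bool" where
  rot: "gstep w (rotate1 w)"
| relabel: "inj_on f (fst ` set w) \<Longrightarrow> gstep w (map (\<lambda>(c,ov,s). (f c, ov, s)) w)"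
| r1: "a \<notin> fst ` set (u @ v) \<Longrightarrow> gstep (u @ v) (u @ [(a,ov,s),(a,\<not>ov,s)] @ v)"
| r2: "a \<notin> fst ` set (u1 @ u2 @ u3) \<Longrightarrow> b \<notin> fst ` set (u1 @ u2 @ u3) \<Longrightarrow> a \<noteq> b \<Longrightarrow>
       Y \<in> {[(a,\<not>ov,s),(b,\<not>ov,\<not>s)], [(b,\<not>ov,\<not>s),(a,\<not>ov,s)]} \<Longrightarrow>
       gstep (u1 @ u2 @ u3) (u1 @ [(a,ov,s),(b,ov,\<not>s)] @ u2 @ Y @ u3)"
| r3: "r3_triple [x1,y1] [x2,y2] [x3,y3] \<Longrightarrow>
       gstep (u1 @ [x1,y1] @ u2 @ [x2,y2] @ u3 @ [x3,y3] @ u4)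
             (u1 @ [y1,x1] @ u2 @ [y2,x2] @ u3 @ [y3,x3] @ u4)"

definition gauss_equiv :: "letter list \<Rightarrow> letter list \<Rightarrow> bool" where
  "gauss_equiv = (\<lambda>x y. gstep x y \<or> gstep y x)\<^sup>*\<^sup>*"

end

theory Submission
  imports Defs
begin

lemma conn_sym: "conn t s = Some s' \<Longrightarrow> conn t s' = Some s"
  by (cases t; cases s; auto)

lemma exitp_ends:
  assumes "q \<in> ends m n T" shows "exitp T q \<in> ends m n T"
proof -
  obtain i j s where q: "q = (i,j,s)" by (cases q) auto
  from assms q obtain s' where c: "conn (T i j) s = Some s'"
    by (auto simp: ends_def has_end_def)
  show ?thesis using assms q c conn_sym[OF c]
    by (auto simp: ends_def has_end_def exitp_def valid_port_def)
qed

lemma classical_nb: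
  assumes "classical_mosaic m n T" "q \<in> ends m n T"
  shows "\<not> is_boundary m n q"
  using assms by (cases q) (auto simp: classical_mosaic_def ends_def)

lemma classical_nbr_ends:
  assumes "classical_mosaic m n T" "q \<in> ends m n T"
  shows "nbr m n id q \<in> ends m n T"
proof -
  have nb: "\<not> is_boundary m n q" using classical_nb[OF assms] .
  obtain i j s where q: "q = (i,j,s)" by (cases q) auto
  have v: "valid_port m n (nbr m n id q)"
    using nb assms(2) q by (cases s) (auto simp: nbr_def is_boundary_def valid_port_def ends_def)
  have "has_end T (nbr m n id q)" using assms nb q
    by (auto simp: classical_mosaic_def ends_def simp del: id_apply)
  then show ?thesis using v by (simp add: ends_def)
qed

lemma step_ends:
  assumes "classical_mosaic m n T" "q \<in> ends m n T"
  shows "step m n T id q \<in> ends m n T"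
  using classical_nbr_ends[OF assms(1) exitp_ends[OF assms(2)]] by (simp add: step_def)

lemma iter_ends:
  assumes "classical_mosaic m n T" "q \<in> ends m n T"
  shows "(step m n T id ^^ k) q \<in> ends m n T"
  using step_ends[OF assms(1)] assms(2) by (induction k) auto

definition wd :: "nat \<Rightarrow> nat" where "wd n = 2*n+1"

lemma wd_gt: "n < wd n" by (simp add: wd_def)

definition NN :: "nat \<Rightarrow> nat \<Rightarrow> nat" where "NN m n = m * (wd n)"

definition Tn :: "nat \<Rightarrow> nat \<Rightarrow> mtiles \<Rightarrow> mtiles" where
  "Tn m n T = (\<lambda>i k. if k div (wd n) < m \<and> k mod (wd n) < n
      then T (k div (wd n)) (k mod (wd n)) else T0)"

definition phi :: "nat \<Rightarrow> port \<Rightarrow> port" where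
  "phi n q = (case q of (i,j,s) \<Rightarrow> (0, i*(wd n)+j, s))"

definition pr :: "nat \<Rightarrow> nat \<Rightarrow> nat \<Rightarrow> nat" where
  "pr m n a = (if a < 2*n then 2*n - 1 - a else if a = 2*n then 2*(1 + NN m n) - 1
      else 2*(1 + NN m n) + 2*n - 1 - a)"

lemma divmod_gen: "j < (w::nat) \<Longrightarrow> (i*w+j) div w = i \<and> (i*w+j) mod w = j"
  by simp

lemma divmod_w: "j < n \<Longrightarrow> (i*(wd n)+j) div (wd n) = i \<and> (i*(wd n)+j) mod (wd n) = j"
  using divmod_gen[of j "wd n" i] wd_gt[of n] by linarith

lemma Tn_phi: "i < m \<Longrightarrow> j < n \<Longrightarrow> Tn m n T i' (i*(wd n)+j) = T i j"
  using divmod_w[of j n i] by (simp add: Tn_def)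

lemma has_end_phi: "valid_port m n q \<Longrightarrow> has_end (Tn m n T) (phi n q) = has_end T q"
  by (cases q) (auto simp: has_end_def phi_def valid_port_def Tn_phi)

lemma exitp_phi: "valid_port m n q \<Longrightarrow> exitp (Tn m n T) (phi n q) = phi n (exitp T q)"
  by (cases q) (auto simp: exitp_def phi_def valid_port_def Tn_phi)

lemma valid_phi: "valid_port m n q \<Longrightarrow> valid_port 1 (NN m n) (phi n q)"
proof (cases q)
  case (fields i j s)
  assume "valid_port m n q"
  then have "i < m" "j < n" using fields by (auto simp: valid_port_def)
  then have "i*(wd n)+j < m*(wd n)"
  proof -
    have "(i+1)*(wd n) \<le> m*(wd n)" using \<open>i < m\<close> by (intro mult_le_mono1) simp
    then show ?thesis using \<open>j < n\<close> wd_gt[of n] by simp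
  qed
  then show ?thesis using fields by (simp add: valid_port_def phi_def NN_def)
qed

lemma phi_inj: "valid_port m n q \<Longrightarrow> valid_port m n q' \<Longrightarrow> phi n q = phi n q' \<Longrightarrow> q = q'"
  apply (cases q; cases q')
  apply (auto simp: phi_def valid_port_def)
  by (metis divmod_w)+

lemma nbr_phi:
  assumes cl: "classical_mosaic m n T" and qe: "q \<in> ends m n T"
  shows "nbr 1 (NN m n) (pr m n) (phi n q) = phi n (nbr m n id q)"
proof -
  obtain i j s where q: "q = (i,j,s)" by (cases q) auto
  have nb: "\<not> is_boundary m n q" using classical_nb[OF cl qe] .
  have ij: "i < m" "j < n" using qe q by (auto simp: ends_def valid_port_def)
  have m0: "0 < m" "0 < n" using cl by (auto simp: classical_mosaic_def)
  define w where "w = wd n"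
  define k where "k = i * w + j"
  have w: "w = 2*n+1" by (simp add: w_def wd_def)
  have NN: "NN m n = m * w" by (simp add: NN_def w_def)
  have mw: "w \<le> m * w" using m0 by simp
  have kl: "k + (w - j) \<le> m * w"
  proof -
    have "(i+1)*w \<le> m*w" using ij by (intro mult_le_mono1) simp
    moreover have "k + (w - j) = (i+1)*w" using ij w by (simp add: k_def)
    ultimately show ?thesis by simp
  qed
  have kw: "i > 0 \<Longrightarrow> k \<ge> w"
  proof -
    assume "i > 0" then have "1 * w \<le> i * w" by (intro mult_le_mono1) simp
    then show ?thesis unfolding k_def by linarith
  qed
  have kw2: "i > 0 \<Longrightarrow> k - w = (i - 1) * w + j"
    by (simp add: k_def w_def diff_mult_distrib)
  have kup: "i + 1 < m \<Longrightarrow> k + w < m * w"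
  proof -
    assume a: "i + 1 < m"
    have "(i+2)*w \<le> m*w" using a by (intro mult_le_mono1) simp
    then show ?thesis using ij w by (simp add: k_def w_def)
  qed
  have kup2: "k + w = (i+1)*w + j" by (simp add: k_def)
  have j0: "j > 0 \<Longrightarrow> k - 1 = i * w + (j - 1)" by (simp add: k_def w_def)
  have ph: "phi n q = (0, k, s)" by (simp add: phi_def q k_def w_def)
  show ?thesis
  proof (cases s)
    case N
    then have "i + 1 < m" using nb q ij by (auto simp: is_boundary_def)
    then show ?thesis using ph q N kl kup kup2 mw w NN
      by (auto simp: nbr_def is_boundary_def bidx_def bport_def pr_def phi_def w_def)
  next
    case S
    then have "i > 0" using nb q ij by (auto simp: is_boundary_def)
    then show ?thesis using ph q S kl kw kw2 mw w NN
      by (auto simp: nbr_def is_boundary_def bidx_def bport_def pr_def phi_def w_def)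
  next
    case E
    then have "j + 1 < n" using nb q ij by (auto simp: is_boundary_def)
    then show ?thesis using ph q E kl mw w NN
      by (auto simp: nbr_def is_boundary_def phi_def k_def w_def)
  next
    case W
    then have "j > 0" using nb q ij by (auto simp: is_boundary_def)
    then show ?thesis using ph q W j0 w NN
      by (auto simp: nbr_def is_boundary_def phi_def k_def w_def)
  qed
qed

abbreviation "stp m n T \<equiv> step 1 (NN m n) (Tn m n T) (pr m n)"

lemma step_phi:
  assumes cl: "classical_mosaic m n T" and qe: "q \<in> ends m n T"
  shows "stp m n T (phi n q) = phi n (step m n T id q)"
proof -
  have v: "valid_port m n q" using qe by (simp add: ends_def)
  show ?thesis
    using exitp_phi[OF v] nbr_phi[OF cl exitp_ends[OF qe]] by (simp add: step_def)
qed

lemma iter_phi: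
  assumes cl: "classical_mosaic m n T" and qe: "q \<in> ends m n T"
  shows "(stp m n T ^^ k) (phi n q) = phi n ((step m n T id ^^ k) q)"
proof (induction k)
  case 0 then show ?case by simp
next
  case (Suc k)
  have "stp m n T (phi n ((step m n T id ^^ k) q)) = phi n (step m n T id ((step m n T id ^^ k) q))"
    by (rule step_phi[OF cl iter_ends[OF cl qe]])
  then show ?case using Suc.IH by (simp add: id_def)
qed

lemma ends_phi:
  assumes cl: "classical_mosaic m n T"
  shows "ends 1 (NN m n) (Tn m n T) = phi n ` ends m n T"
proof
  show "phi n ` ends m n T \<subseteq> ends 1 (NN m n) (Tn m n T)"
    using valid_phi has_end_phi by (fastforce simp: ends_def)
next
  show "ends 1 (NN m n) (Tn m n T) \<subseteq> phi n ` ends m n T"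
  proof
    fix q' assume a: "q' \<in> ends 1 (NN m n) (Tn m n T)"
    obtain i k s where q': "q' = (i,k,s)" by (cases q') auto
    have i0: "i = 0" and kl: "k < NN m n" using a q' by (auto simp: ends_def valid_port_def)
    have he: "conn (Tn m n T i k) s \<noteq> None" using a q' by (auto simp: ends_def has_end_def)
    have c: "k div wd n < m \<and> k mod wd n < n"
    proof (rule ccontr)
      assume "\<not> ?thesis"
      then have "Tn m n T i k = T0" by (auto simp: Tn_def)
      then show False using he by simp
    qed
    define q where "q = (k div wd n, k mod wd n, s)"
    have vq: "valid_port m n q" using c by (simp add: q_def valid_port_def)
    have pq: "phi n q = q'" using i0 q' by (simp add: q_def phi_def)
    have "has_end T q" using has_end_phi[OF vq, of T] pq a by (simp add: ends_def)
    then show "q' \<in> phi n ` ends m n T" using vq pq by (auto simp: ends_def)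
  qed
qed

definition fl :: "nat \<Rightarrow> nat \<Rightarrow> nat" where "fl n c = c div n * wd n + c mod n"

lemma fl_inj: "0 < n \<Longrightarrow> inj (fl n)"
proof (rule injI)
  fix x y assume n: "0 < n" and e: "fl n x = fl n y"
  have "x mod n < n" "y mod n < n" using n by auto
  then have "x div n = y div n \<and> x mod n = y mod n"
    using e divmod_w[of "x mod n" n "x div n"] divmod_w[of "y mod n" n "y div n"]
    unfolding fl_def by metis
  then show "x = y" by (metis div_mult_mod_eq)
qed

lemma mem_phi_img:
  assumes "Orb \<subseteq> {q. valid_port m n q}" "i < m" "j < n"
  shows "((0, i * wd n + j, s) \<in> phi n ` Orb) = ((i,j,s) \<in> Orb)"
proof
  assume "(0, i * wd n + j, s) \<in> phi n ` Orb"
  then obtain x where x: "x \<in> Orb" "phi n x = (0, i * wd n + j, s)" by auto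
  have "phi n (i,j,s) = (0, i * wd n + j, s)" by (simp add: phi_def)
  then have "x = (i,j,s)" using phi_inj[of m n x "(i,j,s)"] x assms by (auto simp: valid_port_def)
  then show "(i,j,s) \<in> Orb" using x by simp
next
  assume "(i,j,s) \<in> Orb"
  then show "(0, i * wd n + j, s) \<in> phi n ` Orb" by (force simp: phi_def)
qed

lemma cross_sign_phi:
  assumes "Orb \<subseteq> {q. valid_port m n q}" "i < m" "j < n"
  shows "cross_sign (Tn m n T) (phi n ` Orb) 0 (i * wd n + j) = cross_sign T Orb i j"
  using mem_phi_img[OF assms] Tn_phi[OF assms(2,3)] by (simp add: cross_sign_def)

lemma orbit_phi:
  assumes cl: "classical_mosaic m n T" and qe: "q \<in> ends m n T"
  shows "orbit_of 1 (NN m n) (Tn m n T) (pr m n) (phi n q) = phi n ` orbit_of m n T id q"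
  unfolding orbit_of_def using iter_phi[OF cl qe] by (auto simp: image_image)

lemma orbit_valid:
  assumes cl: "classical_mosaic m n T" and qe: "q \<in> ends m n T"
  shows "orbit_of m n T id q \<subseteq> {q. valid_port m n q}"
  unfolding orbit_of_def using iter_ends[OF cl qe] by (auto simp: ends_def)

lemma gauss_phi:
  assumes cl: "classical_mosaic m n T" and qe: "q \<in> ends m n T"
  shows "gauss_code 1 (NN m n) (Tn m n T) (pr m n) (phi n q)
       = map (\<lambda>(c,ov,s). (fl n c, ov, s)) (gauss_code m n T id q)"
proof -
  have n0: "0 < n" using cl by (simp add: classical_mosaic_def)
  have vq: "valid_port m n q" using qe by (simp add: ends_def)
  have Liff: "((stp m n T ^^ k) (phi n q) = phi n q) = ((step m n T id ^^ k) q = q)" for k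
  proof -
    have v: "valid_port m n ((step m n T id ^^ k) q)" using iter_ends[OF cl qe, of k] by (simp add: ends_def)
    show ?thesis using iter_phi[OF cl qe, of k] phi_inj[OF v vq] by auto
  qed
  have L: "(LEAST k. 0 < k \<and> (stp m n T ^^ k) (phi n q) = phi n q)
         = (LEAST k. 0 < k \<and> (step m n T id ^^ k) q = q)"
    using Liff by simp
  define Orb where "Orb = orbit_of m n T id q"
  have Ov: "Orb \<subseteq> {q. valid_port m n q}" using orbit_valid[OF cl qe] by (simp add: Orb_def)
  have O: "orbit_of 1 (NN m n) (Tn m n T) (pr m n) (phi n q) = phi n ` Orb"
    using orbit_phi[OF cl qe] by (simp add: Orb_def)
  have pt: "(case (stp m n T ^^ k) (phi n q) of (i,j,s) \<Rightarrow>
                 if crossing_tile (Tn m n T i j) then [(i*NN m n+j, over_at (Tn m n T i j) s,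
                    cross_sign (Tn m n T) (phi n ` Orb) i j)] else [])
        = map (\<lambda>(c,ov,s). (fl n c, ov, s)) (case (step m n T id ^^ k) q of (i,j,s) \<Rightarrow>
                 if crossing_tile (T i j) then [(i*n+j, over_at (T i j) s, cross_sign T Orb i j)] else [])"
    for k
  proof -
    obtain i j s where e: "(step m n T id ^^ k) q = (i,j,s)" by (cases "(step m n T id ^^ k) q") auto
    have ij: "i < m" "j < n" using iter_ends[OF cl qe, of k] e by (auto simp: ends_def valid_port_def)
    have e2: "(stp m n T ^^ k) (phi n q) = (0, i * wd n + j, s)"
      using iter_phi[OF cl qe, of k] e by (simp add: phi_def)
    have fl: "fl n (i*n+j) = i * wd n + j" using ij by (simp add: fl_def)
    show ?thesis using e e2 fl Tn_phi[OF ij, of T 0] cross_sign_phi[OF Ov ij, of T] by simp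
  qed
  show ?thesis
    unfolding gauss_code_def Let_def L O Orb_def[symmetric]
    by (simp add: map_concat pt comp_def del: One_nat_def)
qed

lemma NN_ge: "0 < m \<Longrightarrow> wd n \<le> NN m n"
  by (simp add: NN_def)

lemma pr_props:
  assumes "0 < m" "k < 2*(1 + NN m n)"
  shows "pr m n k < 2*(1 + NN m n) \<and> pr m n k \<noteq> k \<and> pr m n (pr m n k) = k"
proof -
  have hN: "2*n+1 \<le> NN m n" using NN_ge[OF assms(1), of n] by (simp add: wd_def)
  show ?thesis
proof (cases "k < 2*n")
  case True
  then have "pr m n k = 2*n - 1 - k" by (simp add: pr_def)
  moreover have "2*n - 1 - k \<noteq> k" using True by presburger
  moreover have "pr m n (2*n - 1 - k) = k" using True by (simp add: pr_def)
  ultimately show ?thesis using True hN by simp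
next
  case F: False
  show ?thesis
  proof (cases "k = 2*n")
    case True then show ?thesis using hN by (simp add: pr_def)
  next
    case False
    then have k: "2*n < k" using F by simp
    show ?thesis
    proof (cases "k = 2*NN m n+1")
      case True then show ?thesis using hN by (simp add: pr_def)
    next
      case False
      then have k2: "k < 2*NN m n+1" using assms(2) by simp
      have "pr m n k = 2*(1 + NN m n) + 2*n - 1 - k" using k by (simp add: pr_def)
      moreover have "2*(1 + NN m n) + 2*n - 1 - k \<noteq> k" by presburger
      moreover have "pr m n (2*(1 + NN m n) + 2*n - 1 - k) = k"
      proof -
        have e: "\<not> 2*(1 + NN m n) + 2*n - 1 - k < 2*n" "2*(1 + NN m n) + 2*n - 1 - k \<noteq> 2*n" using k2 by auto
        show ?thesis unfolding pr_def using e k2 by simp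
      qed
      ultimately show ?thesis using k k2 by simp
    qed
  qed
qed
qed

lemma bport_props:
  assumes "0 < Z" "k < 2*(1+Z)"
  shows "valid_port 1 Z (bport 1 Z k) \<and> is_boundary 1 Z (bport 1 Z k) \<and> bidx 1 Z (bport 1 Z k) = k"
  using assms by (auto simp: bport_def valid_port_def is_boundary_def bidx_def)

lemma bidx_props:
  assumes "0 < Z" "valid_port 1 Z q" "is_boundary 1 Z q"
  shows "bidx 1 Z q < 2*(1+Z) \<and> bport 1 Z (bidx 1 Z q) = q"
  using assms by (cases q; cases "snd (snd q)") (auto simp: bport_def valid_port_def is_boundary_def bidx_def)

lemma nbr_inv:
  assumes N0: "0 < Z" and p: "\<And>k. k < 2*(1+Z) \<Longrightarrow> p k < 2*(1+Z) \<and> p (p k) = k"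
    and v: "valid_port 1 Z q"
  shows "valid_port 1 Z (nbr 1 Z p q) \<and> nbr 1 Z p (nbr 1 Z p q) = q"
proof (cases "is_boundary 1 Z q")
  case True
  have b: "bidx 1 Z q < 2*(1+Z)" "bport 1 Z (bidx 1 Z q) = q" using bidx_props[OF N0 v True] by auto
  have pb: "p (bidx 1 Z q) < 2*(1+Z)" using p[OF b(1)] by simp
  note bp = bport_props[OF N0 pb]
  have "nbr 1 Z p (nbr 1 Z p q) = bport 1 Z (p (p (bidx 1 Z q)))"
    using True bp by (simp add: nbr_def)
  also have "\<dots> = q" using p[OF b(1)] b(2) by simp
  finally show ?thesis using True bp by (simp add: nbr_def)
next
  case False
  obtain i k s where q: "q = (i,k,s)" by (cases q) auto
  show ?thesis using False v q
    by (cases s) (auto simp: nbr_def is_boundary_def valid_port_def)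
qed

lemma virtual:
  assumes cl: "classical_mosaic m n T"
  shows "virtual_mosaic 1 (NN m n) (Tn m n T) (pr m n)"
proof -
  have m0: "0 < m" "0 < n" using cl by (auto simp: classical_mosaic_def)
  have N0: "0 < NN m n" using m0 by (simp add: NN_def wd_def)
  have p: "k < 2*(1+NN m n) \<Longrightarrow> pr m n k < 2*(1+NN m n) \<and> pr m n (pr m n k) = k" for k
    using pr_props[OF m0(1)] by blast
  note ep = ends_phi[OF cl]
  have fwd: "has_end (Tn m n T) (nbr 1 (NN m n) (pr m n) q')"
    if v: "valid_port 1 (NN m n) q'" and h: "has_end (Tn m n T) q'" for q'
  proof -
    have "q' \<in> phi n ` ends m n T" using v h ep by (auto simp: ends_def)
    then obtain q where q: "q \<in> ends m n T" "q' = phi n q" by auto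
    have "nbr 1 (NN m n) (pr m n) q' = phi n (nbr m n id q)" using nbr_phi[OF cl q(1)] q by simp
    moreover have "phi n (nbr m n id q) \<in> ends 1 (NN m n) (Tn m n T)"
      using classical_nbr_ends[OF cl q(1)] ep by auto
    ultimately show ?thesis by (simp add: ends_def)
  qed
  have "has_end (Tn m n T) q' = has_end (Tn m n T) (nbr 1 (NN m n) (pr m n) q')"
    if v: "valid_port 1 (NN m n) q'" for q'
  proof
    assume "has_end (Tn m n T) q'" then show "has_end (Tn m n T) (nbr 1 (NN m n) (pr m n) q')"
      using fwd v by blast
  next
    assume h: "has_end (Tn m n T) (nbr 1 (NN m n) (pr m n) q')"
    note ni = nbr_inv[OF N0 p v]
    show "has_end (Tn m n T) q'" using fwd[OF _ h] ni by simp
  qed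
  then show ?thesis unfolding virtual_mosaic_def using m0 N0 pr_props[OF m0(1)] by auto
qed

definition rho :: "nat \<Rightarrow> nat \<Rightarrow> nat \<Rightarrow> nat" where
  "rho n Z k = (if k \<le> 2*n then 2*n - k else 2*(1+Z) + 2*n - k)"

lemma rho_pr:
  assumes "0 < m" "k < 2*(1 + NN m n)"
  shows "Suc (pr m n k) mod (2*(1 + NN m n)) = rho n (NN m n) k"
proof -
  have hN: "2*n+1 \<le> NN m n" using NN_ge[OF assms(1), of n] by (simp add: wd_def)
  show ?thesis
  proof (cases "k < 2*n")
    case True then show ?thesis using hN by (simp add: pr_def rho_def)
  next
    case False
    show ?thesis
    proof (cases "k = 2*n")
      case True then show ?thesis using hN by (simp add: pr_def rho_def)
    next
      case F2: False
      then have "Suc (pr m n k) = 2*(1 + NN m n) + 2*n - k" using False assms(2) by (simp add: pr_def)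
      moreover have "2*(1 + NN m n) + 2*n - k < 2*(1 + NN m n)" using False F2 assms(2) by simp
      ultimately show ?thesis using False F2 by (simp add: rho_def)
    qed
  qed
qed

lemma rho_props:
  assumes "2*n+1 \<le> Z" "k < 2*(1+Z)"
  shows "rho n Z k < 2*(1+Z) \<and> rho n Z (rho n Z k) = k"
  using assms by (auto simp: rho_def)

lemma vert_rel_eq:
  assumes m0: "0 < m"
  shows "vert_rel 1 (NN m n) (pr m n) = Id \<union> {(k, rho n (NN m n) k) | k. k < 2*(1 + NN m n)}"
proof -
  define Z where "Z = NN m n"
  have hN: "2*n+1 \<le> Z" using NN_ge[OF assms(1), of n] by (simp add: wd_def Z_def)
  define G where "G = {(k, rho n Z k) | k. k < 2*(1 + Z)}"
  have R: "{(k, Suc (pr m n k) mod (2*(1+Z))) | k. k < 2*(1+Z)} = G"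
  proof -
    have e: "Suc (pr m n k) mod (2*(1+Z)) = rho n Z k" if "k < 2*(1+Z)" for k
      using rho_pr[OF m0 that[unfolded Z_def]] by (simp add: Z_def)
    show ?thesis unfolding G_def
    proof (intro set_eqI iffI)
      fix x assume "x \<in> {(k, Suc (pr m n k) mod (2*(1+Z))) | k. k < 2*(1+Z)}"
      then obtain k where k: "x = (k, Suc (pr m n k) mod (2*(1+Z)))" "k < 2*(1+Z)" by blast
      then have "x = (k, rho n Z k)" using e[OF k(2)] by simp
      then show "x \<in> {(k, rho n Z k) | k. k < 2*(1+Z)}" using k(2) by blast
    next
      fix x assume "x \<in> {(k, rho n Z k) | k. k < 2*(1+Z)}"
      then obtain k where k: "x = (k, rho n Z k)" "k < 2*(1+Z)" by blast
      then have "x = (k, Suc (pr m n k) mod (2*(1+Z)))" using e[OF k(2)] by simp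
      then show "x \<in> {(k, Suc (pr m n k) mod (2*(1+Z))) | k. k < 2*(1+Z)}" using k(2) by blast
    qed
  qed
  have Gc: "G\<inverse> = G"
  proof
    show "G\<inverse> \<subseteq> G"
    proof
      fix x assume "x \<in> G\<inverse>"
      then obtain k where k: "x = (rho n Z k, k)" "k < 2*(1+Z)" by (auto simp: G_def)
      have r: "rho n Z k < 2*(1+Z)" "rho n Z (rho n Z k) = k" using rho_props[OF hN k(2)] by auto
      then have "x = (rho n Z k, rho n Z (rho n Z k))" using k by simp
      then show "x \<in> G" using r unfolding G_def by blast
    qed
    show "G \<subseteq> G\<inverse>"
    proof
      fix x assume "x \<in> G"
      then obtain k where k: "x = (k, rho n Z k)" "k < 2*(1+Z)" by (auto simp: G_def)
      have r: "rho n Z k < 2*(1+Z)" "rho n Z (rho n Z k) = k" using rho_props[OF hN k(2)] by auto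
      have "(rho n Z k, rho n Z (rho n Z k)) \<in> G" using r(1) unfolding G_def by blast
      then have "(rho n Z k, k) \<in> G" using r(2) by simp
      then show "x \<in> G\<inverse>" using k by simp
    qed
  qed
  have "G\<^sup>* \<subseteq> Id \<union> G"
  proof (rule subrelI)
    fix x y assume "(x,y) \<in> G\<^sup>*"
    then show "(x,y) \<in> Id \<union> G"
    proof (induction rule: rtrancl_induct)
      case base then show ?case by simp
    next
      case (step y z)
      from step.hyps(2) obtain a where a: "y = a" "z = rho n Z a" "a < 2*(1+Z)" unfolding G_def by blast
      show ?case
      proof (cases "(x,y) \<in> G")
        case False
        then have "x = y" using step.IH by auto
        then show ?thesis using step.hyps(2) by auto
      next
        case True
        then obtain b where b: "x = b" "y = rho n Z b" "b < 2*(1+Z)" unfolding G_def by blast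
        then have "z = x" using a rho_props[OF hN b(3)] by simp
        then show ?thesis by simp
      qed
    qed
  qed
  moreover have "Id \<union> G \<subseteq> G\<^sup>*" using r_into_rtrancl by fast
  ultimately have "G\<^sup>* = Id \<union> G" by blast
  then have "vert_rel 1 Z (pr m n) = Id \<union> G" unfolding vert_rel_def Let_def R Gc by simp
  then show ?thesis unfolding G_def Z_def .
qed

lemma num_vertices_eq:
  assumes m0: "0 < m"
  shows "num_vertices 1 (NN m n) (pr m n) = NN m n + 2"
proof -
  define Z where "Z = NN m n"
  have hN: "2*n+1 \<le> Z" using NN_ge[OF assms(1), of n] by (simp add: wd_def Z_def)
  define f where "f = (\<lambda>x. {x, rho n Z x})"
  have cls: "(Id \<union> {(k, rho n Z k) | k. k < 2*(1 + Z)}) `` {x} = f x" if "x < 2*(1+Z)" for x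
    using that by (auto simp: f_def)
  have VR: "vert_rel 1 Z (pr m n) = Id \<union> {(k, rho n Z k) | k. k < 2*(1 + Z)}"
    using vert_rel_eq[OF m0] by (simp add: Z_def)
  have Q: "{0..<2*(1+Z)} // vert_rel 1 Z (pr m n) = f ` {0..<2*(1+Z)}"
    unfolding VR quotient_def using cls by auto
  define Rep where "Rep = {0..n} \<union> {2*n+1..Z+n+1}"
  have RepM: "Rep \<subseteq> {0..<2*(1+Z)}" using hN by (auto simp: Rep_def)
  have img: "f ` {0..<2*(1+Z)} = f ` Rep"
  proof
    show "f ` Rep \<subseteq> f ` {0..<2*(1+Z)}" using RepM by auto
    show "f ` {0..<2*(1+Z)} \<subseteq> f ` Rep"
    proof
      fix X assume "X \<in> f ` {0..<2*(1+Z)}"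
      then obtain x where x: "x < 2*(1+Z)" "X = f x" by auto
      show "X \<in> f ` Rep"
      proof (cases "x \<in> Rep")
        case True then show ?thesis using x by auto
      next
        case False
        then have r: "rho n Z x \<in> Rep" using x hN by (auto simp: Rep_def rho_def)
        have "f (rho n Z x) = f x" using rho_props[OF hN x(1)] by (auto simp: f_def)
        then show ?thesis using r x(2) by (metis image_eqI)
      qed
    qed
  qed
  have inj: "inj_on f Rep"
  proof (rule inj_onI)
    fix x y assume xy: "x \<in> Rep" "y \<in> Rep" "f x = f y"
    then have "x = y \<or> x = rho n Z y" by (auto simp: f_def doubleton_eq_iff)
    moreover have "x = y" if e: "x = rho n Z y"
    proof (cases "y \<le> 2*n")
      case True
      then have yn: "y \<le> n" and ex: "x = 2*n - y" using xy(2) e by (auto simp: Rep_def rho_def)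
      then have "x \<le> n" using xy(1) unfolding Rep_def by auto
      moreover have "x + y = 2*n" using ex yn by simp
      ultimately show ?thesis using yn unfolding distrib_left by linarith
    next
      case False
      then have yn: "y \<le> Z+n+1" and ex: "x = 2*(1+Z) + 2*n - y" using xy(2) e by (auto simp: Rep_def rho_def)
      then have "x \<le> Z+n+1" using xy(1) hN unfolding Rep_def by auto
      moreover have "x + y = 2*(1+Z) + 2*n" using ex yn by simp
      ultimately show ?thesis using yn unfolding distrib_left by linarith
    qed
    ultimately show "x = y" by blast
  qed
  have cR: "card Rep = Z + 2"
  proof -
    have "card Rep = card {0..n} + card {2*n+1..Z+n+1}"
      unfolding Rep_def by (rule card_Un_disjoint) auto
    then show ?thesis using hN by simp
  qed
  show ?thesis unfolding num_vertices_def
    using Q img card_image[OF inj] cR by (simp add: Z_def)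
qed

theorem mainTheorem4:
  assumes "classical_mosaic m n T" and "one_component m n T id"
  shows "\<exists>n' T' p'. virtual_mosaic 1 n' T' p' \<and> one_component 1 n' T' p' \<and>
           mosaic_genus 1 n' p' = 0 \<and>
           (\<exists>w \<in> gauss_codes m n T id. \<exists>w' \<in> gauss_codes 1 n' T' p'. gauss_equiv w w')"
proof -
  note cl = assms(1)
  have m0: "0 < m" "0 < n" using cl by (auto simp: classical_mosaic_def)
  obtain q0 where q0: "q0 \<in> ends m n T"
    and reach: "\<forall>x \<in> ends m n T. \<exists>k. (step m n T id ^^ k) q0 \<in> {x, exitp T x}"
    using assms(2) unfolding one_component_def by blast
  note ep = ends_phi[OF cl]
  have V: "virtual_mosaic 1 (NN m n) (Tn m n T) (pr m n)" by (rule virtual[OF cl])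
  have OC: "one_component 1 (NN m n) (Tn m n T) (pr m n)"
    unfolding one_component_def
  proof (intro conjI bexI ballI)
    show "ends 1 (NN m n) (Tn m n T) \<noteq> {}" using ep q0 by auto
    show "phi n q0 \<in> ends 1 (NN m n) (Tn m n T)" using ep q0 by auto
    fix x' assume "x' \<in> ends 1 (NN m n) (Tn m n T)"
    then obtain x where x: "x \<in> ends m n T" "x' = phi n x" using ep by auto
    obtain k where k: "(step m n T id ^^ k) q0 \<in> {x, exitp T x}" using reach x(1) by blast
    have vx: "valid_port m n x" using x(1) by (simp add: ends_def)
    have "(stp m n T ^^ k) (phi n q0) \<in> {x', exitp (Tn m n T) x'}"
      using iter_phi[OF cl q0, of k] k x(2) exitp_phi[OF vx, of T] by auto
    then show "\<exists>k. (stp m n T ^^ k) (phi n q0) \<in> {x', exitp (Tn m n T) x'}" by blast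
  qed
  have G: "mosaic_genus 1 (NN m n) (pr m n) = 0"
    unfolding mosaic_genus_def num_vertices_eq[OF m0(1)] by simp
  have GE: "gauss_equiv (gauss_code m n T id q0) (gauss_code 1 (NN m n) (Tn m n T) (pr m n) (phi n q0))"
  proof -
    have "gstep (gauss_code m n T id q0) (map (\<lambda>(c,ov,s). (fl n c, ov, s)) (gauss_code m n T id q0))"
      by (rule gstep.relabel) (use fl_inj[OF m0(2)] in \<open>auto intro: inj_on_subset\<close>)
    then show ?thesis unfolding gauss_equiv_def gauss_phi[OF cl q0] by auto
  qed
  have "gauss_code m n T id q0 \<in> gauss_codes m n T id" using q0 by (simp add: gauss_codes_def)
  moreover have "gauss_code 1 (NN m n) (Tn m n T) (pr m n) (phi n q0) \<in> gauss_codes 1 (NN m n) (Tn m n T) (pr m n)"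
    using q0 ep by (auto simp: gauss_codes_def)
  ultimately show ?thesis using V OC G GE by blast
qed

end
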